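(* Let $0<\alpha<1$, let $0<a<b$, and let $x:[a,b]\to\mathbb{R}$ be an absolutely continuous function. Then for $t\in(a,b)$, $$ {_a\mathcal{D}_t^\alpha} x(t)=\frac{1}{\Gamma(1-\alpha)}\left(\ln\frac{t}{a}\right)^{-\alpha}x(t) +B(\alpha)\left(\ln\frac{t}{a}\right)^{1-\alpha}t\dot{x}(t) -\sum_{p=2}^\infty \left[C(\alpha,p)\left(\ln\frac{t}{a}\right)^{1-\alpha-p}V_p(t) - \frac{\Gamma(p+\alpha - 1)}{\Gamma(\alpha)\Gamma(1-\alpha)(p-1)!}\left(\ln\frac{t}{a}\right)^{-\alpha}x(t)\right], $$ where $$ B(\alpha)=\frac{1}{\Gamma(2-\alpha)}\left(1+\sum_{p=1}^\infty\frac{\Gamma(p+\alpha-1)}{\Gamma(\alpha-1)p!}\right),\qquad C(\alpha,p)=\frac{\Gamma(p+\alpha-1)}{\Gamma(-\alpha)\Gamma(1+\alpha)(p-1)!}, $$ $$ V_p(t)=(1-p)\int_a^t \left(\ln\frac{\tau}{a}\right)^{p-2}\frac{x(\tau)}{\tau}\,d\tau,\qquad p=2,3,\ldots $$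
   Context: $\Gamma$ denotes Euler's gamma function. For $0<\alpha<1$ and $x:[a,b]\to\mathbb{R}$ with $0<a<b$, the left Hadamard fractional derivative of order $\alpha$ is $$ {_a\mathcal{D}_t^\alpha} x(t)=t\frac{d}{dt}\left[\frac{1}{\Gamma(1-\alpha)}\int_a^t \left(\ln\frac{t}{\tau}\right)^{-\alpha}\frac{x(\tau)}{\tau}\,d\tau\right],\quad t\in(a,b). $$ $\dot x$ denotes the first derivative of $x$. *)

theory Defs
  imports "HOL-Analysis.Analysis"
begin

definition abs_continuous_on_interval :: "real \<Rightarrow> real \<Rightarrow> (real \<Rightarrow> real) \<Rightarrow> bool" where
  "abs_continuous_on_interval a b x \<longleftrightarrow>
     (\<forall>\<epsilon>>0. \<exists>\<delta>>0. \<forall>(n::nat) (u::nat \<Rightarrow> real) (v::nat \<Rightarrow> real).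
        (\<forall>i<n. a \<le> u i \<and> u i \<le> v i \<and> v i \<le> b) \<and>
        (\<forall>i<n. \<forall>j<n. i \<noteq> j \<longrightarrow> v i \<le> u j \<or> v j \<le> u i) \<and>
        (\<Sum>i<n. v i - u i) < \<delta>
        \<longrightarrow> (\<Sum>i<n. \<bar>x (v i) - x (u i)\<bar>) < \<epsilon>)"

definition hadamard_left_deriv :: "real \<Rightarrow> real \<Rightarrow> (real \<Rightarrow> real) \<Rightarrow> real \<Rightarrow> real" where
  "hadamard_left_deriv \<alpha> a x t =
     t * deriv (\<lambda>s. (1 / Gamma (1 - \<alpha>)) *
                     integral {a..s} (\<lambda>\<tau>. (ln (s / \<tau>)) powr (- \<alpha>) * x \<tau> / \<tau>)) t"

definition hadB :: "real \<Rightarrow> real" where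
  "hadB \<alpha> = (1 / Gamma (2 - \<alpha>)) *
     (1 + (\<Sum>n. Gamma (real (n + 1) + \<alpha> - 1) / (Gamma (\<alpha> - 1) * fact (n + 1))))"

definition hadC :: "real \<Rightarrow> nat \<Rightarrow> real" where
  "hadC \<alpha> p = Gamma (real p + \<alpha> - 1) / (Gamma (- \<alpha>) * Gamma (1 + \<alpha>) * fact (p - 1))"

definition hadV :: "real \<Rightarrow> (real \<Rightarrow> real) \<Rightarrow> nat \<Rightarrow> real \<Rightarrow> real" where
  "hadV a x p t = (1 - real p) * integral {a..t} (\<lambda>\<tau>. (ln (\<tau> / a)) ^ (p - 2) * x \<tau> / \<tau>)"

end

theory Submission imports Defs begin

lemma abs_int_cont_bound:
  fixes f h :: "real \<Rightarrow> real"
  assumes "continuous_on {c..<s} f" "h integrable_on {c..s}"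
    "\<And>\<tau>. \<tau> \<in> {c..<s} \<Longrightarrow> \<bar>f \<tau>\<bar> \<le> h \<tau>"
  shows "f absolutely_integrable_on {c..s}"
proof -
  have m: "f \<in> borel_measurable (lebesgue_on {c..<s})"
    by (rule continuous_imp_measurable_on_sets_lebesgue[OF assms(1)]) auto
  have h: "h integrable_on {c..<s}"
    by (rule integrable_spike_set[OF assms(2)]) (auto intro: negligible_subset[of "{s}"])
  have "f absolutely_integrable_on {c..<s}"
    by (rule measurable_bounded_by_integrable_imp_absolutely_integrable[OF m _ h]) (use assms(3) in auto)
  then show ?thesis
    by (subst absolutely_integrable_spike_set_eq[where f=f and S="{c..s}" and T="{c..<s}"])
       (auto intro: negligible_subset[of "{s}"])
qed

lemma ker_has_int:
  fixes \<beta> c s :: real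
  assumes "0 < c" "c \<le> s" "\<beta> < 1"
  shows "((\<lambda>\<tau>. ln (s / \<tau>) powr (-\<beta>) / \<tau>) has_integral ln (s / c) powr (1 - \<beta>) / (1 - \<beta>)) {c..s}"
proof -
  define F where "F = (\<lambda>\<tau>::real. - (ln (s / \<tau>) powr (1 - \<beta>)) / (1 - \<beta>))"
  have "((\<lambda>\<tau>. ln (s / \<tau>) powr (-\<beta>) / \<tau>) has_integral (F s - F c)) {c..s}"
  proof (rule fundamental_theorem_of_calculus_interior[OF assms(2)])
    have "continuous_on {c..s} (\<lambda>\<tau>. ln (s / \<tau>) powr (1 - \<beta>))"
      using assms by (intro continuous_on_powr') (auto intro!: continuous_intros)
    then show "continuous_on {c..s} F" unfolding F_def using assms
      by (intro continuous_on_minus continuous_on_divide continuous_on_const) auto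
  next
    fix \<tau> assume \<tau>: "\<tau> \<in> {c<..<s}"
    then have pos: "0 < ln (s / \<tau>)" "0 < \<tau>" using assms by auto
    have "((\<lambda>\<tau>. ln (s / \<tau>)) has_real_derivative - 1 / \<tau>) (at \<tau>)"
      using pos assms by (auto intro!: derivative_eq_intros simp: field_simps)
    from DERIV_fun_powr[OF this pos(1), of "1 - \<beta>"]
    have "((\<lambda>\<tau>. ln (s / \<tau>) powr (1 - \<beta>)) has_real_derivative
        (1 - \<beta>) * ln (s / \<tau>) powr (1 - \<beta> - 1) * (- 1 / \<tau>)) (at \<tau>)" by simp
    then have "(F has_real_derivative - ((1 - \<beta>) * ln (s / \<tau>) powr (1 - \<beta> - 1) * (- 1 / \<tau>)) / (1 - \<beta>)) (at \<tau>)"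
      unfolding F_def by (intro DERIV_cdivide DERIV_minus)
    moreover have "- ((1 - \<beta>) * ln (s / \<tau>) powr (1 - \<beta> - 1) * (- 1 / \<tau>)) / (1 - \<beta>) = ln (s / \<tau>) powr (-\<beta>) / \<tau>"
      using assms pos by (simp add: field_simps)
    ultimately have "(F has_real_derivative ln (s / \<tau>) powr (-\<beta>) / \<tau>) (at \<tau>)" by simp
    then show "(F has_vector_derivative ln (s / \<tau>) powr (-\<beta>) / \<tau>) (at \<tau>)"
      by (simp add: has_real_derivative_iff_has_vector_derivative)
  qed
  moreover have "F s - F c = ln (s / c) powr (1 - \<beta>) / (1 - \<beta>)"
    using assms by (simp add: F_def)
  ultimately show ?thesis by simp
qed

lemma ln_diff_bound:
  fixes u v b :: real
  assumes "0 < u" "0 < v" "u \<le> b" "v \<le> b"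
  shows "\<bar>u - v\<bar> \<le> b * \<bar>ln u - ln v\<bar>"
proof -
  have *: "q - p \<le> b * (ln q - ln p)" if "0 < p" "p \<le> q" "q \<le> b" for p q :: real
  proof -
    have "ln (p / q) \<le> p / q - 1" using that by (intro ln_le_minus_one) auto
    then have "ln p - ln q \<le> (p - q) / q" using that by (simp add: ln_div field_simps)
    moreover have "(p - q) / q = - ((q - p) / q)" by (simp add: diff_divide_distrib)
    ultimately have "(q - p) / q \<le> ln q - ln p" by linarith
    then have "q - p \<le> q * (ln q - ln p)" using that by (simp add: field_simps)
    also have "\<dots> \<le> b * (ln q - ln p)" using that by (intro mult_right_mono) auto
    finally show ?thesis .
  qed
  show ?thesis
  proof (cases "u \<le> v")
    case True with *[of u v] assms show ?thesis by (auto simp: abs_if)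
  next
    case False with *[of v u] assms show ?thesis by (auto simp: abs_if)
  qed
qed

lemma powr_mvt_bound:
  fixes p q \<alpha> :: real
  assumes "0 < p" "p \<le> q" "0 < \<alpha>"
  shows "\<bar>q powr (-\<alpha>) - p powr (-\<alpha>)\<bar> \<le> \<alpha> * (q - p) * p powr (-\<alpha>-1)"
proof (cases "p = q")
  case False
  then have pq: "p < q" using assms by simp
  have "\<exists>z. p < z \<and> z < q \<and> q powr (-\<alpha>) - p powr (-\<alpha>) = (q - p) * ((-\<alpha>) * z powr (-\<alpha> - 1))"
    proof (rule MVT2[OF pq])
    fix z assume "p \<le> z" "z \<le> q"
    then show "((\<lambda>v. v powr (-\<alpha>)) has_real_derivative (-\<alpha>) * z powr (-\<alpha> - 1)) (at z)"
      using assms has_real_derivative_powr[of z "-\<alpha>"] by auto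
  qed
  then obtain z where z: "p < z" "z < q" "q powr (-\<alpha>) - p powr (-\<alpha>) = (q - p) * ((-\<alpha>) * z powr (-\<alpha> - 1))"
    by blast
  have "z powr (-\<alpha> - 1) \<le> p powr (-\<alpha> - 1)"
    using z assms by (intro powr_mono2') auto
  then have "\<bar>q powr (-\<alpha>) - p powr (-\<alpha>)\<bar> = \<alpha> * (q - p) * z powr (-\<alpha> - 1)"
    using z assms pq by (simp add: abs_mult)
  also have "\<dots> \<le> \<alpha> * (q - p) * p powr (-\<alpha> - 1)"
    using \<open>z powr (-\<alpha> - 1) \<le> p powr (-\<alpha> - 1)\<close> assms pq by (intro mult_left_mono) auto
  finally show ?thesis .
qed simp

lemma notnpi_pos: "(z::real) > 0 \<Longrightarrow> z \<notin> \<int>\<^sub>\<le>\<^sub>0" by auto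

lemma notnpi_negfrac: assumes "0 < (\<alpha>::real)" "\<alpha> < 1" shows "-\<alpha> \<notin> \<int>\<^sub>\<le>\<^sub>0"
proof
  assume "-\<alpha> \<in> \<int>\<^sub>\<le>\<^sub>0"
  then obtain k :: nat where k: "-\<alpha> = - of_nat k" by (elim nonpos_Ints_cases')
  then have "\<alpha> = of_nat k" by simp
  with assms show False by (cases k) auto
qed

lemma gamma_coefs:
  fixes \<alpha> :: real and n :: nat
  assumes "0 < \<alpha>" "\<alpha> < 1"
  shows "hadC \<alpha> (n + 2) = - (\<alpha> * pochhammer (\<alpha> + 1) n / (Gamma (1 - \<alpha>) * fact (n + 1)))"
    "Gamma (real (n + 2) + \<alpha> - 1) / (Gamma \<alpha> * Gamma (1 - \<alpha>) * fact (n + 2 - 1))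
       = \<alpha> * pochhammer (\<alpha> + 1) n / (Gamma (1 - \<alpha>) * fact (n + 1))"
proof -
  have a1: "\<alpha> \<notin> \<int>\<^sub>\<le>\<^sub>0" using assms by (intro notnpi_pos)
  have a2: "-\<alpha> \<notin> \<int>\<^sub>\<le>\<^sub>0" using assms by (rule notnpi_negfrac)
  have ga: "Gamma \<alpha> > 0" "Gamma (1 - \<alpha>) > 0" using assms by (auto intro: Gamma_real_pos)
  have e1: "Gamma (real (n + 2) + \<alpha> - 1) = \<alpha> * pochhammer (\<alpha> + 1) n * Gamma \<alpha>"
  proof -
    have "pochhammer \<alpha> (Suc n) = Gamma (\<alpha> + of_nat (Suc n)) / Gamma \<alpha>"
      by (rule pochhammer_Gamma[OF a1])
    moreover have "real (n + 2) + \<alpha> - 1 = \<alpha> + of_nat (Suc n)" by simp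
    ultimately show ?thesis using ga by (simp add: pochhammer_rec field_simps)
  qed
  have e2: "Gamma (1 + \<alpha>) = \<alpha> * Gamma \<alpha>" using Gamma_plus1[OF a1] by (simp add: add.commute)
  have e3: "Gamma (1 - \<alpha>) = (-\<alpha>) * Gamma (-\<alpha>)" using Gamma_plus1[OF a2] by simp
  have e4: "Gamma (-\<alpha>) * Gamma (1 + \<alpha>) = - (Gamma \<alpha> * Gamma (1 - \<alpha>))"
    using e2 e3 by (simp add: algebra_simps)
  show "hadC \<alpha> (n + 2) = - (\<alpha> * pochhammer (\<alpha> + 1) n / (Gamma (1 - \<alpha>) * fact (n + 1)))"
  proof -
    have gen: "\<alpha> * P * A / (- (A * B) * F) = - (\<alpha> * P / (B * F))" if "A \<noteq> 0" for A B F P :: real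
      using that by (simp add: field_simps)
    have nn: "n + 2 - 1 = n + 1" by simp
    show ?thesis unfolding hadC_def e1 e4 nn using gen[of "Gamma \<alpha>"] ga by simp
  qed
  show "Gamma (real (n + 2) + \<alpha> - 1) / (Gamma \<alpha> * Gamma (1 - \<alpha>) * fact (n + 2 - 1))
       = \<alpha> * pochhammer (\<alpha> + 1) n / (Gamma (1 - \<alpha>) * fact (n + 1))"
  proof -
    have gen: "\<alpha> * P * A / (A * B * F) = \<alpha> * P / (B * F)" if "A \<noteq> 0" for A B F P :: real
      using that by (simp add: field_simps)
    have nn: "n + 2 - 1 = n + 1" by simp
    show ?thesis unfolding e1 nn using gen[of "Gamma \<alpha>"] ga by simp
  qed
qed

lemma poch_fact_lim:
  fixes \<alpha> :: real assumes "0 < \<alpha>" "\<alpha> < 1"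
  shows "(\<lambda>N. pochhammer \<alpha> N / fact N) \<longlonglongrightarrow> 0"
proof -
  have r: "rGamma_series \<alpha> \<longlonglongrightarrow> rGamma \<alpha>" by (rule rGamma_series_LIMSEQ)
  have p: "(\<lambda>N. real N powr (\<alpha> - 1)) \<longlonglongrightarrow> 0"
    by (rule tendsto_neg_powr) (use assms in \<open>auto intro: filterlim_real_sequentially\<close>)
  have q: "(\<lambda>N. exp (\<alpha> * ln (real N)) / (\<alpha> + real N)) \<longlonglongrightarrow> 0"
  proof (rule Lim_null_comparison[OF _ p])
    show "eventually (\<lambda>N. norm (exp (\<alpha> * ln (real N)) / (\<alpha> + real N)) \<le> real N powr (\<alpha> - 1)) sequentially"
      using eventually_ge_at_top[of "1::nat"]
    proof eventually_elim
      case (elim N)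
      then have Np: "real N > 0" by simp
      have "exp (\<alpha> * ln (real N)) = real N powr \<alpha>" using Np by (simp add: powr_def mult.commute)
      moreover have "real N powr (\<alpha> - 1) = real N powr \<alpha> / real N" using Np by (simp add: powr_diff)
      moreover have "real N powr \<alpha> / (\<alpha> + real N) \<le> real N powr \<alpha> / real N"
        using Np assms by (intro divide_left_mono) auto
      ultimately show ?case using Np assms by simp
    qed
  qed
  have "(\<lambda>N. rGamma_series \<alpha> N * (exp (\<alpha> * ln (real N)) / (\<alpha> + real N))) \<longlonglongrightarrow> rGamma \<alpha> * 0"
    by (rule tendsto_mult[OF r q])
  then have lim: "(\<lambda>N. rGamma_series \<alpha> N * (exp (\<alpha> * ln (real N)) / (\<alpha> + real N))) \<longlonglongrightarrow> 0" by simp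
  show ?thesis
  proof (rule Lim_transform_eventually[OF lim])
    show "eventually (\<lambda>N. rGamma_series \<alpha> N * (exp (\<alpha> * ln (real N)) / (\<alpha> + real N)) = pochhammer \<alpha> N / fact N) sequentially"
      using eventually_ge_at_top[of "1::nat"]
    proof eventually_elim
      case (elim N)
      define E where "E = exp (\<alpha> * ln (real N))"
      have E: "E \<noteq> 0" by (simp add: E_def)
      have pr: "pochhammer \<alpha> (N + 1) = (\<alpha> + real N) * pochhammer \<alpha> N"
        by (simp add: pochhammer_rec')
      have nz: "fact N \<noteq> (0::real)" "\<alpha> + real N \<noteq> 0" using assms by auto
      have gen: "(X * P) / (F * E) * (E / X) = P / F" if "X \<noteq> 0" "E \<noteq> 0" "F \<noteq> 0" for X P F E :: real
        using that by (simp add: field_simps)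
      have "rGamma_series \<alpha> N = pochhammer \<alpha> (N + 1) / (fact N * E)"
        by (simp add: rGamma_series_def E_def)
      then show ?case unfolding E_def[symmetric] pr using gen[OF nz(2) E nz(1)] by simp
    qed
  qed
qed

lemma hadB_zero:
  fixes \<alpha> :: real assumes "0 < \<alpha>" "\<alpha> < 1"
  shows "hadB \<alpha> = 0"
proof -
  have a1: "\<alpha> - 1 \<notin> \<int>\<^sub>\<le>\<^sub>0"
  proof
    assume "\<alpha> - 1 \<in> \<int>\<^sub>\<le>\<^sub>0"
    then obtain k :: nat where k: "\<alpha> - 1 = - of_nat k" by (elim nonpos_Ints_cases')
    then have "\<alpha> = 1 - of_nat k" by simp
    with assms show False by (cases k) auto
  qed
  define f where "f = (\<lambda>n::nat. Gamma (real (n + 1) + \<alpha> - 1) / (Gamma (\<alpha> - 1) * fact (n + 1)))"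
  have fe: "f n = pochhammer (\<alpha> - 1) (n + 1) / fact (n + 1)" for n
  proof -
    have "pochhammer (\<alpha> - 1) (n + 1) = Gamma (\<alpha> - 1 + of_nat (n + 1)) / Gamma (\<alpha> - 1)"
      by (rule pochhammer_Gamma[OF a1])
    moreover have "\<alpha> - 1 + of_nat (n + 1) = real (n + 1) + \<alpha> - 1" by simp
    ultimately show ?thesis by (simp add: f_def field_simps)
  qed
  have ps: "(\<Sum>n<N. f n) = pochhammer \<alpha> N / fact N - 1" for N
  proof (induction N)
    case (Suc N)
    have r1: "pochhammer (\<alpha> - 1) (Suc N) = (\<alpha> - 1) * pochhammer \<alpha> N"
      by (simp add: pochhammer_rec)
    have r2: "pochhammer \<alpha> (Suc N) = (\<alpha> + real N) * pochhammer \<alpha> N"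
      by (simp add: pochhammer_rec')
    have "(\<Sum>n<Suc N. f n) = pochhammer \<alpha> N / fact N - 1 + (\<alpha> - 1) * pochhammer \<alpha> N / fact (Suc N)"
      using Suc by (simp add: fe r1)
    also have "\<dots> = pochhammer \<alpha> (Suc N) / fact (Suc N) - 1"
    proof -
      have gen: "P / F - 1 + (\<alpha> - 1) * P / (X * F) = ((\<alpha> + (X - 1)) * P) / (X * F) - 1"
        if "F \<noteq> 0" "X \<noteq> 0" for P F X :: real
        using that by (simp add: field_simps)
      have fs: "fact (Suc N) = real (Suc N) * fact N" by simp
      show ?thesis unfolding r2 fs using gen[of "fact N" "real (Suc N)" "pochhammer \<alpha> N"] by simp
    qed
    finally show ?case .
  qed simp
  have "(\<lambda>N. \<Sum>n<N. f n) \<longlonglongrightarrow> 0 - 1"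
    unfolding ps by (intro tendsto_diff poch_fact_lim assms tendsto_const)
  then have "f sums (-1)" by (simp add: sums_def)
  then have "suminf f = -1" by (rule sums_unique[symmetric])
  then show ?thesis by (simp add: hadB_def f_def)
qed

lemma ac_cont:
  assumes "abs_continuous_on_interval a b x"
  shows "continuous_on {a..b} x"
  unfolding continuous_on_iff
proof (intro ballI allI impI)
  fix y e :: real assume y: "y \<in> {a..b}" and e: "0 < e"
  obtain d where d: "d > 0" and H0: "\<forall>(n::nat) (u::nat \<Rightarrow> real) (v::nat \<Rightarrow> real).
        (\<forall>i<n. a \<le> u i \<and> u i \<le> v i \<and> v i \<le> b) \<and>
        (\<forall>i<n. \<forall>j<n. i \<noteq> j \<longrightarrow> v i \<le> u j \<or> v j \<le> u i) \<and>
        (\<Sum>i<n. v i - u i) < d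
        \<longrightarrow> (\<Sum>i<n. \<bar>x (v i) - x (u i)\<bar>) < e"
    using assms[unfolded abs_continuous_on_interval_def, rule_format, OF e] by blast
  note H = H0[rule_format]
  show "\<exists>d>0. \<forall>x'\<in>{a..b}. dist x' y < d \<longrightarrow> dist (x x') (x y) < e"
  proof (intro exI[of _ d] conjI ballI impI)
    fix z assume z: "z \<in> {a..b}" "dist z y < d"
    have "(\<Sum>i<(1::nat). \<bar>x ((\<lambda>_. max z y) i) - x ((\<lambda>_. min z y) i)\<bar>) < e"
    proof (rule mp[OF spec[OF spec[OF spec[OF H0, of 1], of "\<lambda>_. min z y"], of "\<lambda>_. max z y"]])
      show "(\<forall>i<(1::nat). a \<le> min z y \<and> min z y \<le> max z y \<and> max z y \<le> b) \<and>
        (\<forall>i<(1::nat). \<forall>j<(1::nat). i \<noteq> j \<longrightarrow> max z y \<le> min z y \<or> max z y \<le> min z y) \<and>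
        (\<Sum>i<(1::nat). max z y - min z y) < d"
        using z y by (auto simp: dist_real_def)
    qed
    then show "dist (x z) (x y) < e"
      by (cases "z \<le> y") (auto simp: dist_real_def max_def min_def abs_minus_commute)
  qed (rule d)
qed

locale hs =
  fixes \<alpha> a b t :: real and x :: "real \<Rightarrow> real"
  assumes al: "0 < \<alpha>" "\<alpha> < 1" and ab: "0 < a" and tin: "a < t" "t < b"
    and cont: "continuous_on {a..b} x" and dif: "x differentiable (at t)"
begin

lemma lip: "\<exists>M>0. \<forall>\<tau>\<in>{a..b}. \<bar>x \<tau> - x t\<bar> \<le> M * \<bar>ln \<tau> - ln t\<bar>"
proof -
  obtain D where D: "(x has_real_derivative D) (at t)"
    using dif DERIV_deriv_iff_real_differentiable by blast
  then have "((\<lambda>y. (x y - x t) / (y - t)) \<longlongrightarrow> D) (at t)"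
    by (simp add: has_field_derivative_iff)
  then have "((\<lambda>y. \<bar>(x y - x t) / (y - t)\<bar>) \<longlongrightarrow> \<bar>D\<bar>) (at t)"
    by (rule tendsto_rabs)
  then have "eventually (\<lambda>y. \<bar>(x y - x t) / (y - t)\<bar> < \<bar>D\<bar> + 1) (at t)"
    by (rule order_tendstoD) simp
  then obtain d where d: "d > 0" "\<And>y. y \<noteq> t \<Longrightarrow> dist y t < d \<Longrightarrow> \<bar>(x y - x t) / (y - t)\<bar> < \<bar>D\<bar> + 1"
    unfolding eventually_at by auto
  have "compact (x ` {a..b})" by (intro compact_continuous_image cont) auto
  then obtain B where B: "\<And>y. y \<in> {a..b} \<Longrightarrow> \<bar>x y\<bar> \<le> B"
    using compact_imp_bounded bounded_real by fastforce
  define M' where "M' = max (\<bar>D\<bar> + 1) (2 * B / d)"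
  have M': "\<bar>x \<tau> - x t\<bar> \<le> M' * \<bar>\<tau> - t\<bar>" if "\<tau> \<in> {a..b}" for \<tau>
  proof (cases "\<tau> = t")
    case False
    show ?thesis
    proof (cases "dist \<tau> t < d")
      case True
      with d(2)[OF False] False have "\<bar>x \<tau> - x t\<bar> / \<bar>\<tau> - t\<bar> < \<bar>D\<bar> + 1" by (simp add: abs_divide)
      then have "\<bar>x \<tau> - x t\<bar> \<le> (\<bar>D\<bar> + 1) * \<bar>\<tau> - t\<bar>" using False by (simp add: field_simps)
      also have "\<dots> \<le> M' * \<bar>\<tau> - t\<bar>" unfolding M'_def by (intro mult_right_mono) auto
      finally show ?thesis .
    next
      case far: False
      have "\<bar>x \<tau> - x t\<bar> \<le> 2 * B" using B[OF that] B[of t] tin by auto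
      also have "\<dots> = (2 * B / d) * d" using d by simp
      also have "\<dots> \<le> (2 * B / d) * \<bar>\<tau> - t\<bar>"
        using far d B[of t] tin by (intro mult_left_mono) (auto simp: dist_real_def)
      also have "\<dots> \<le> M' * \<bar>\<tau> - t\<bar>" unfolding M'_def by (intro mult_right_mono) auto
      finally show ?thesis .
    qed
  qed simp
  have pos: "M' > 0" unfolding M'_def by auto
  show ?thesis
  proof (intro exI[of _ "M' * b"] conjI ballI)
    show "M' * b > 0" using pos ab tin by simp
    fix \<tau> assume \<tau>: "\<tau> \<in> {a..b}"
    have "\<bar>x \<tau> - x t\<bar> \<le> M' * \<bar>\<tau> - t\<bar>" by (rule M'[OF \<tau>])
    also have "\<dots> \<le> M' * (b * \<bar>ln \<tau> - ln t\<bar>)"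
      using \<tau> ab tin pos by (intro mult_left_mono ln_diff_bound) auto
    finally show "\<bar>x \<tau> - x t\<bar> \<le> M' * b * \<bar>ln \<tau> - ln t\<bar>" by (simp add: mult_ac)
  qed
qed

definition "L = ln (t / a)"
definition "gg \<tau> = x \<tau> - x t"
definition "M = (SOME M. M > 0 \<and> (\<forall>\<tau>\<in>{a..b}. \<bar>x \<tau> - x t\<bar> \<le> M * \<bar>ln \<tau> - ln t\<bar>))"
definition "kK \<tau> = ln (t / \<tau>) powr (-\<alpha>-1) * gg \<tau> / \<tau>"
definition "K = integral {a..t} kK"

lemma M: "M > 0" "\<And>\<tau>. \<tau> \<in> {a..b} \<Longrightarrow> \<bar>gg \<tau>\<bar> \<le> M * \<bar>ln \<tau> - ln t\<bar>"
proof -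
  have "M > 0 \<and> (\<forall>\<tau>\<in>{a..b}. \<bar>x \<tau> - x t\<bar> \<le> M * \<bar>ln \<tau> - ln t\<bar>)"
    unfolding M_def by (rule someI_ex) (use lip in blast)
  then show "M > 0" "\<And>\<tau>. \<tau> \<in> {a..b} \<Longrightarrow> \<bar>gg \<tau>\<bar> \<le> M * \<bar>ln \<tau> - ln t\<bar>"
    by (auto simp: gg_def)
qed

lemma Lpos: "L > 0" using ab tin by (simp add: L_def)

lemma gg_bound_left: "\<tau> \<in> {a..t} \<Longrightarrow> \<bar>gg \<tau>\<bar> \<le> M * ln (t / \<tau>)"
proof -
  assume \<tau>: "\<tau> \<in> {a..t}"
  then have "\<bar>ln \<tau> - ln t\<bar> = ln (t / \<tau>)" using ab by (simp add: ln_div)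
  with M(2)[of \<tau>] \<tau> tin show ?thesis by auto
qed

lemma cont_gg: "continuous_on {a..b} gg"
  unfolding gg_def by (intro continuous_intros cont)

lemma ker_int: "s > a \<Longrightarrow> (\<lambda>\<tau>. ln (s / \<tau>) powr (-\<alpha>) / \<tau>) integrable_on {a..s}"
  using ker_has_int[of a s \<alpha>] ab al by (auto simp: integrable_on_def)

lemma K_int: "kK absolutely_integrable_on {a..t}"
proof (rule abs_int_cont_bound)
  show "continuous_on {a..<t} kK"
    unfolding kK_def using ab tin
    by (intro continuous_intros continuous_on_powr' continuous_on_subset[OF cont_gg]) auto
  show "(\<lambda>\<tau>. M * (ln (t / \<tau>) powr (-\<alpha>) / \<tau>)) integrable_on {a..t}"
    using ker_int[of t] tin integrable_on_cmult_left[of "\<lambda>\<tau>. ln (t / \<tau>) powr (-\<alpha>) / \<tau>" "{a..t}" M] by auto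
  fix \<tau> assume \<tau>: "\<tau> \<in> {a..<t}"
  then have lp: "ln (t / \<tau>) > 0" "\<tau> > 0" using ab by auto
  have "\<bar>kK \<tau>\<bar> = ln (t / \<tau>) powr (-\<alpha>-1) * \<bar>gg \<tau>\<bar> / \<tau>"
    using lp by (simp add: kK_def abs_mult)
  also have "\<dots> \<le> ln (t / \<tau>) powr (-\<alpha>-1) * (M * ln (t / \<tau>)) / \<tau>"
    using gg_bound_left[of \<tau>] \<tau> lp by (intro divide_right_mono mult_left_mono) auto
  also have "\<dots> = M * (ln (t / \<tau>) powr (-\<alpha>) / \<tau>)"
    using lp by (simp add: powr_diff field_simps powr_minus)
  finally show "\<bar>kK \<tau>\<bar> \<le> M * (ln (t / \<tau>) powr (-\<alpha>) / \<tau>)" .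
qed

lemma Bg: "\<exists>B. \<forall>\<tau>\<in>{a..b}. \<bar>gg \<tau>\<bar> \<le> B"
proof -
  have "compact (gg ` {a..b})" by (intro compact_continuous_image cont_gg) auto
  then show ?thesis using compact_imp_bounded bounded_real by fastforce
qed

lemma gint: assumes "a < s" "s \<le> b"
  shows "(\<lambda>\<tau>. ln (s / \<tau>) powr (-\<alpha>) * gg \<tau> / \<tau>) absolutely_integrable_on {a..s}"
proof -
  obtain B where B: "\<And>\<tau>. \<tau> \<in> {a..b} \<Longrightarrow> \<bar>gg \<tau>\<bar> \<le> B" using Bg by blast
  show ?thesis
  proof (rule abs_int_cont_bound)
    show "continuous_on {a..<s} (\<lambda>\<tau>. ln (s / \<tau>) powr (-\<alpha>) * gg \<tau> / \<tau>)"
      using ab assms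
      by (intro continuous_intros continuous_on_powr' continuous_on_subset[OF cont_gg]) auto
    show "(\<lambda>\<tau>. B * (ln (s / \<tau>) powr (-\<alpha>) / \<tau>)) integrable_on {a..s}"
      using ker_int[of s] assms integrable_on_cmult_left[of "\<lambda>\<tau>. ln (s / \<tau>) powr (-\<alpha>) / \<tau>" "{a..s}" B] by auto
    fix \<tau> assume \<tau>: "\<tau> \<in> {a..<s}"
    then have lp: "ln (s / \<tau>) > 0" "\<tau> > 0" using ab by auto
    have "\<bar>ln (s / \<tau>) powr (-\<alpha>) * gg \<tau> / \<tau>\<bar> = ln (s / \<tau>) powr (-\<alpha>) * \<bar>gg \<tau>\<bar> / \<tau>"
      using lp by (simp add: abs_mult)
    also have "\<dots> \<le> ln (s / \<tau>) powr (-\<alpha>) * B / \<tau>"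
      using B[of \<tau>] \<tau> lp assms by (intro divide_right_mono mult_left_mono) auto
    finally show "\<bar>ln (s / \<tau>) powr (-\<alpha>) * gg \<tau> / \<tau>\<bar> \<le> B * (ln (s / \<tau>) powr (-\<alpha>) / \<tau>)"
      by (simp add: mult_ac)
  qed
qed

lemma R_bound:
  assumes "a \<le> c" "c \<le> s" "s \<le> b" "D \<ge> 0"
    and D: "\<And>\<tau>. \<tau> \<in> {c..s} \<Longrightarrow> \<bar>ln \<tau> - ln t\<bar> \<le> D"
  shows "\<bar>integral {c..s} (\<lambda>\<tau>. ln (s / \<tau>) powr (-\<alpha>) * gg \<tau> / \<tau>)\<bar>
           \<le> M * D * (ln (s / c) powr (1 - \<alpha>) / (1 - \<alpha>))"
proof (cases "c = s")
  case True then show ?thesis by simp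
next
  case False
  then have cs: "c < s" using assms by simp
  have i1: "(\<lambda>\<tau>. ln (s / \<tau>) powr (-\<alpha>) * gg \<tau> / \<tau>) integrable_on {c..s}"
  proof -
    have "(\<lambda>\<tau>. ln (s / \<tau>) powr (-\<alpha>) * gg \<tau> / \<tau>) absolutely_integrable_on {c..s}"
      by (rule absolutely_integrable_on_subinterval[OF gint]) (use assms cs in auto)
    then show ?thesis by (rule set_lebesgue_integral_eq_integral(1))
  qed
  have "((\<lambda>\<tau>. M * D * (ln (s / \<tau>) powr (-\<alpha>) / \<tau>)) has_integral
          M * D * (ln (s / c) powr (1 - \<alpha>) / (1 - \<alpha>))) {c..s}"
    using ker_has_int[of c s \<alpha>] assms ab al by (intro has_integral_mult_right) auto
  then have i2: "(\<lambda>\<tau>. M * D * (ln (s / \<tau>) powr (-\<alpha>) / \<tau>)) integrable_on {c..s}"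
    and e2: "integral {c..s} (\<lambda>\<tau>. M * D * (ln (s / \<tau>) powr (-\<alpha>) / \<tau>)) = M * D * (ln (s / c) powr (1 - \<alpha>) / (1 - \<alpha>))"
    by (auto simp: integrable_on_def integral_unique)
  have "norm (integral {c..s} (\<lambda>\<tau>. ln (s / \<tau>) powr (-\<alpha>) * gg \<tau> / \<tau>))
         \<le> integral {c..s} (\<lambda>\<tau>. M * D * (ln (s / \<tau>) powr (-\<alpha>) / \<tau>))"
  proof (rule integral_norm_bound_integral[OF i1 i2])
    fix \<tau> assume \<tau>: "\<tau> \<in> {c..s}"
    then have tp: "\<tau> > 0" "\<tau> \<in> {a..b}" using ab assms by auto
    have "\<bar>gg \<tau>\<bar> \<le> M * D"
      using M(2)[OF tp(2)] D[OF \<tau>] M(1) by (meson mult_left_mono order.trans less_imp_le)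
    then have "ln (s / \<tau>) powr (-\<alpha>) * \<bar>gg \<tau>\<bar> / \<tau> \<le> ln (s / \<tau>) powr (-\<alpha>) * (M * D) / \<tau>"
      using tp by (intro divide_right_mono mult_left_mono) auto
    then show "norm (ln (s / \<tau>) powr (-\<alpha>) * gg \<tau> / \<tau>) \<le> M * D * (ln (s / \<tau>) powr (-\<alpha>) / \<tau>)"
      using tp by (simp add: abs_mult mult_ac)
  qed
  then show ?thesis using e2 by simp
qed

definition "tau0 s = t * exp (-2 * \<bar>ln s - ln t\<bar>)"
definition "cnd s \<longleftrightarrow> a < s \<and> s < b \<and> s \<noteq> t \<and> 2 * \<bar>ln s - ln t\<bar> \<le> L"
definition "qf s \<tau> = (if \<tau> \<in> {..tau0 s} then (ln (s / \<tau>) powr (-\<alpha>) - ln (t / \<tau>) powr (-\<alpha>)) / (ln s - ln t) * gg \<tau> / \<tau> else 0)"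

lemma cnd_ev: "eventually cnd (at t)"
proof -
  have "((\<lambda>s. ln s) \<longlongrightarrow> ln t) (at t)" by (intro tendsto_intros) (use tin ab in auto)
  then have "((\<lambda>s. \<bar>ln s - ln t\<bar>) \<longlongrightarrow> \<bar>ln t - ln t\<bar>) (at t)" by (intro tendsto_rabs tendsto_diff tendsto_const)
  then have e1: "eventually (\<lambda>s. \<bar>ln s - ln t\<bar> < L / 2) (at t)"
    using Lpos by (intro order_tendstoD) auto
  have e2: "eventually (\<lambda>s. a < s) (at t)" using tin
    by (intro order_tendstoD(1)[OF tendsto_ident_at]) auto
  have e3: "eventually (\<lambda>s. s < b) (at t)" using tin
    by (intro order_tendstoD(2)[OF tendsto_ident_at]) auto
  have e4: "eventually (\<lambda>s. s \<noteq> t) (at t)" by (simp add: eventually_at_filter)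
  show ?thesis using e1 e2 e3 e4 unfolding cnd_def by eventually_elim auto
qed

lemma cnd_props:
  assumes "cnd s"
  shows "a \<le> tau0 s" "tau0 s < t" "tau0 s \<le> s" "ln s \<noteq> ln t"
    "ln (tau0 s) = ln t - 2 * \<bar>ln s - ln t\<bar>" "0 < s" "0 < tau0 s" "tau0 s < s"
proof -
  have s: "a < s" "s < b" "s \<noteq> t" "2 * \<bar>ln s - ln t\<bar> \<le> L" using assms by (auto simp: cnd_def)
  show sp: "0 < s" using s ab by simp
  show ne: "ln s \<noteq> ln t" using s sp tin ab by simp
  show l0: "ln (tau0 s) = ln t - 2 * \<bar>ln s - ln t\<bar>" using tin ab by (simp add: tau0_def ln_mult)
  show tp: "tau0 s > 0" using tin ab by (simp add: tau0_def)
  have "ln a \<le> ln (tau0 s)" using l0 s(4) ab tin by (simp add: L_def ln_div)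
  then show "a \<le> tau0 s" using tp ab by simp
  have "ln (tau0 s) < ln t" using l0 ne by simp
  then show "tau0 s < t" using tp tin ab by simp
  have "ln (tau0 s) < ln s" using l0 ne by (simp add: abs_if)
  then show "tau0 s < s" using tp sp by simp
  have "ln (tau0 s) \<le> ln s" using l0 by (simp add: abs_if)
  then show "tau0 s \<le> s" using tp sp by simp
qed

definition "Cd = \<alpha> * 2 powr (\<alpha> + 1) * M"

lemma qf_bound:
  assumes "cnd s" "\<tau> \<in> {a..t}"
  shows "\<bar>qf s \<tau>\<bar> \<le> Cd * (ln (t / \<tau>) powr (-\<alpha>) / \<tau>)"
proof (cases "\<tau> \<in> {..tau0 s}")
  case False
  have "0 \<le> Cd * (ln (t / \<tau>) powr (-\<alpha>) / \<tau>)"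
    using assms(2) ab M(1) al unfolding Cd_def by (intro mult_nonneg_nonneg divide_nonneg_nonneg) auto
  then show ?thesis using False by (simp add: qf_def)
next
  case True
  note cp = cnd_props[OF assms(1)]
  define h where "h = ln s - ln t"
  define v where "v = ln (t / \<tau>)"
  define w where "w = ln (s / \<tau>)"
  have tp: "\<tau> > 0" using assms(2) ab by auto
  have hne: "h \<noteq> 0" using cp unfolding h_def by simp
  have "\<tau> \<le> tau0 s" using True by simp
  then have "ln \<tau> \<le> ln (tau0 s)" using tp cp(7) by simp
  then have l1: "ln \<tau> \<le> ln t - 2 * \<bar>h\<bar>" using cp(5) unfolding h_def by linarith
  have ve: "v = ln t - ln \<tau>" unfolding v_def using tp tin ab by (simp add: ln_div)
  have we: "w = ln s - ln \<tau>" unfolding w_def using tp cp by (simp add: ln_div)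
  have v2: "v \<ge> 2 * \<bar>h\<bar>" using ve l1 by linarith
  have vp: "v > 0" using v2 hne by simp
  have wv: "w = v + h" using ve we unfolding h_def by linarith
  have w2: "w \<ge> v / 2" using wv v2 abs_ge_minus_self[of h] by linarith
  have wp: "w > 0" using w2 vp by linarith
  define p where "p = min v w"
  define q where "q = max v w"
  have pp: "p > 0" "p \<le> q" "p \<ge> v / 2" using vp wp w2 unfolding p_def q_def by linarith+
  have e1: "\<bar>w powr (-\<alpha>) - v powr (-\<alpha>)\<bar> = \<bar>q powr (-\<alpha>) - p powr (-\<alpha>)\<bar>"
    by (cases "v \<le> w") (simp_all add: p_def q_def abs_minus_commute)
  have e2: "q - p = \<bar>h\<bar>"
    by (cases "v \<le> w") (use wv in \<open>simp_all add: p_def q_def\<close>)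
  have "\<bar>q powr (-\<alpha>) - p powr (-\<alpha>)\<bar> \<le> \<alpha> * (q - p) * p powr (-\<alpha>-1)"
    by (rule powr_mvt_bound) (use pp al in auto)
  moreover have "p powr (-\<alpha>-1) \<le> (v / 2) powr (-\<alpha>-1)"
    using pp vp al by (intro powr_mono2') auto
  then have "\<alpha> * \<bar>h\<bar> * p powr (-\<alpha>-1) \<le> \<alpha> * \<bar>h\<bar> * (v / 2) powr (-\<alpha>-1)"
    using al by (intro mult_left_mono) auto
  ultimately have k: "\<bar>w powr (-\<alpha>) - v powr (-\<alpha>)\<bar> \<le> \<alpha> * \<bar>h\<bar> * (v / 2) powr (-\<alpha>-1)"
    unfolding e1 e2 by linarith
  have v2e: "(v / 2) powr (-\<alpha>-1) = 2 powr (\<alpha> + 1) * v powr (-\<alpha>-1)"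
  proof -
    have "(v / 2) powr (-\<alpha>-1) = v powr (-\<alpha>-1) / 2 powr (-\<alpha>-1)"
      using vp by (simp add: powr_divide)
    also have "(2::real) powr (-\<alpha>-1) = 2 powr (-(\<alpha>+1))"
      by (rule arg_cong[where f="\<lambda>e. (2::real) powr e"]) simp
    also have "(2::real) powr (-(\<alpha>+1)) = inverse (2 powr (\<alpha>+1))" by (rule powr_minus)
    finally show ?thesis by (simp only: divide_inverse inverse_inverse_eq mult.commute)
  qed
  have vv: "v powr (-\<alpha>-1) * v = v powr (-\<alpha>)"
  proof -
    have "v powr (-\<alpha>) = v powr (-\<alpha>-1 + 1)" by simp
    also have "\<dots> = v powr (-\<alpha>-1) * v" using vp by (subst powr_add) simp
    finally show ?thesis by simp
  qed
  have gb: "\<bar>gg \<tau>\<bar> \<le> M * v" using gg_bound_left[OF assms(2)] unfolding v_def .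
  have qe: "qf s \<tau> = (w powr (-\<alpha>) - v powr (-\<alpha>)) / h * gg \<tau> / \<tau>"
    using True unfolding qf_def v_def w_def h_def by simp
  have "\<bar>qf s \<tau>\<bar> = \<bar>w powr (-\<alpha>) - v powr (-\<alpha>)\<bar> / \<bar>h\<bar> * \<bar>gg \<tau>\<bar> / \<tau>"
    unfolding qe using tp by (simp add: abs_mult abs_divide)
  also have "\<dots> \<le> (\<alpha> * \<bar>h\<bar> * (v / 2) powr (-\<alpha>-1)) / \<bar>h\<bar> * (M * v) / \<tau>"
    using k gb tp hne al by (intro divide_right_mono mult_mono) auto
  also have "\<dots> = \<alpha> * 2 powr (\<alpha> + 1) * M * (v powr (-\<alpha>-1) * v) / \<tau>"
    using hne unfolding v2e by simp
  also have "\<dots> = Cd * (ln (t / \<tau>) powr (-\<alpha>) / \<tau>)"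
    using vv unfolding Cd_def v_def by simp
  finally show ?thesis .
qed

lemma qf_int:
  assumes "cnd s" shows "qf s integrable_on {a..t}"
proof -
  note cp = cnd_props[OF assms]
  have "continuous_on {a..tau0 s} (\<lambda>\<tau>. (ln (s / \<tau>) powr (-\<alpha>) - ln (t / \<tau>) powr (-\<alpha>)) / (ln s - ln t) * gg \<tau> / \<tau>)"
  proof -
    have Spos: "\<forall>\<tau>\<in>{a..tau0 s}. 0 < \<tau> \<and> 0 < ln (s / \<tau>) \<and> 0 < ln (t / \<tau>)"
      using cp ab by auto
    have c1: "continuous_on {a..tau0 s} (\<lambda>\<tau>. ln (s / \<tau>) powr (-\<alpha>))"
      by (intro continuous_on_powr' continuous_on_ln continuous_on_divide continuous_on_const continuous_on_id)
        (use Spos in \<open>auto simp: less_imp_le\<close>)+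
    have c2: "continuous_on {a..tau0 s} (\<lambda>\<tau>. ln (t / \<tau>) powr (-\<alpha>))"
      by (intro continuous_on_powr' continuous_on_ln continuous_on_divide continuous_on_const continuous_on_id)
        (use Spos in \<open>auto simp: less_imp_le\<close>)+
    have c3: "continuous_on {a..tau0 s} gg"
      by (rule continuous_on_subset[OF cont_gg]) (use cp tin in auto)
    show ?thesis
      by (intro continuous_on_divide continuous_on_mult continuous_on_diff c1 c2 c3 continuous_on_const continuous_on_id)
        (use Spos cp in force)+
  qed
  then have "(\<lambda>\<tau>. (ln (s / \<tau>) powr (-\<alpha>) - ln (t / \<tau>) powr (-\<alpha>)) / (ln s - ln t) * gg \<tau> / \<tau>) integrable_on ({..tau0 s} \<inter> {a..t})"
  proof -
    have "{..tau0 s} \<inter> {a..t} = {a..tau0 s}" using cp by auto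
    then show ?thesis using integrable_continuous_interval[OF \<open>continuous_on {a..tau0 s} _\<close>] by metis
  qed
  then show ?thesis unfolding qf_def by (subst integrable_restrict_Int) 
qed

lemma qf_lim:
  assumes Y: "\<And>k. cnd (Y k)" "Y \<longlonglongrightarrow> t" and \<tau>: "\<tau> \<in> {a..t}"
  shows "(\<lambda>k. qf (Y k) \<tau>) \<longlonglongrightarrow> -\<alpha> * kK \<tau>"
proof (cases "\<tau> = t")
  case True
  have "qf (Y k) \<tau> = 0" for k using cnd_props(2)[OF Y(1)[of k]] True by (simp add: qf_def)
  moreover have "kK \<tau> = 0" using True tin ab by (simp add: kK_def)
  ultimately show ?thesis by simp
next
  case False
  then have \<tau>t: "\<tau> < t" "0 < \<tau>" using \<tau> ab by auto
  have lnY: "(\<lambda>k. ln (Y k)) \<longlonglongrightarrow> ln t"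
    by (rule tendsto_ln[OF Y(2)]) (use tin ab in auto)
  have "(\<lambda>k. tau0 (Y k)) \<longlonglongrightarrow> t * exp (-2 * \<bar>ln t - ln t\<bar>)"
    unfolding tau0_def by (intro tendsto_intros lnY)
  then have "(\<lambda>k. tau0 (Y k)) \<longlonglongrightarrow> t" by simp
  then have ev: "eventually (\<lambda>k. \<tau> < tau0 (Y k)) sequentially"
    using \<tau>t by (intro order_tendstoD(1)) auto
  define \<phi> where "\<phi> = (\<lambda>\<sigma>. (\<sigma> - ln \<tau>) powr (-\<alpha>))"
  define d where "d = -\<alpha> * (ln t - ln \<tau>) powr (-\<alpha> - 1)"
  have lt: "ln t - ln \<tau> > 0" using \<tau>t by simp
  have "((\<lambda>\<sigma>. \<sigma> - ln \<tau>) has_real_derivative 1) (at (ln t))"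
    by (auto intro!: derivative_eq_intros)
  from DERIV_fun_powr[OF this lt, of "-\<alpha>"]
  have "(\<phi> has_real_derivative d) (at (ln t))" by (simp add: \<phi>_def d_def)
  then have dq: "((\<lambda>\<sigma>. (\<phi> \<sigma> - \<phi> (ln t)) / (\<sigma> - ln t)) \<longlongrightarrow> d) (at (ln t))"
    by (simp add: has_field_derivative_iff)
  have fl: "filterlim (\<lambda>k. ln (Y k)) (at (ln t)) sequentially"
    by (rule filterlim_atI[OF lnY]) (use cnd_props(4)[OF Y(1)] in auto)
  have "(\<lambda>k. (\<phi> (ln (Y k)) - \<phi> (ln t)) / (ln (Y k) - ln t)) \<longlonglongrightarrow> d"
    by (rule filterlim_compose[OF dq fl])
  then have lim: "(\<lambda>k. (\<phi> (ln (Y k)) - \<phi> (ln t)) / (ln (Y k) - ln t) * gg \<tau> / \<tau>) \<longlonglongrightarrow> d * gg \<tau> / \<tau>"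
    by (intro tendsto_intros) (use \<tau>t in auto)
  have "d * gg \<tau> / \<tau> = -\<alpha> * kK \<tau>"
    using \<tau>t tin by (simp add: d_def kK_def ln_div)
  moreover have "eventually (\<lambda>k. (\<phi> (ln (Y k)) - \<phi> (ln t)) / (ln (Y k) - ln t) * gg \<tau> / \<tau> = qf (Y k) \<tau>) sequentially"
    using ev
  proof eventually_elim
    case (elim k)
    have yp: "Y k > 0" using cnd_props(6)[OF Y(1)[of k]] .
    show ?case using elim yp \<tau>t tin by (simp add: qf_def \<phi>_def ln_div)
  qed
  ultimately show ?thesis using Lim_transform_eventually[OF lim] by simp
qed

lemma Q_lim: "((\<lambda>s. integral {a..t} (qf s)) \<longlongrightarrow> -\<alpha> * K) (at t)"
  unfolding tendsto_at_iff_sequentially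
proof (intro allI impI)
  fix X :: "nat \<Rightarrow> real"
  assume X: "\<forall>i. X i \<in> UNIV - {t}" "X \<longlonglongrightarrow> t"
  have "filterlim X (at t) sequentially"
    by (rule filterlim_atI[OF X(2)]) (use X(1) in auto)
  from eventually_compose_filterlim[OF cnd_ev this]
  obtain N where N: "\<And>n. n \<ge> N \<Longrightarrow> cnd (X n)" unfolding eventually_sequentially by blast
  define Y where "Y = (\<lambda>n. X (n + N))"
  have Yc: "cnd (Y k)" for k using N by (simp add: Y_def)
  have Yt: "Y \<longlonglongrightarrow> t" unfolding Y_def by (rule LIMSEQ_ignore_initial_segment[OF X(2)])
  have hint: "(\<lambda>\<tau>. Cd * (ln (t / \<tau>) powr (-\<alpha>) / \<tau>)) integrable_on {a..t}"
    using ker_int[of t] tin integrable_on_cmult_left[of "\<lambda>\<tau>. ln (t / \<tau>) powr (-\<alpha>) / \<tau>" "{a..t}" Cd] by auto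
  have "(\<lambda>k. integral {a..t} (qf (Y k))) \<longlonglongrightarrow> integral {a..t} (\<lambda>\<tau>. -\<alpha> * kK \<tau>)"
    by (rule dominated_convergence(2)[OF qf_int[OF Yc] hint])
       (use qf_bound[OF Yc] qf_lim[OF Yc Yt] in auto)
  then have "(\<lambda>k. integral {a..t} (qf (Y k))) \<longlonglongrightarrow> -\<alpha> * K" by (simp add: K_def)
  then have "(\<lambda>n. integral {a..t} (qf (X n))) \<longlonglongrightarrow> -\<alpha> * K"
    unfolding Y_def by (rule LIMSEQ_offset)
  then show "((\<lambda>s. integral {a..t} (qf s)) \<circ> X) \<longlonglongrightarrow> -\<alpha> * K" by (simp add: o_def)
qed

definition "G s = integral {a..s} (\<lambda>\<tau>. ln (s / \<tau>) powr (-\<alpha>) * gg \<tau> / \<tau>)"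
definition "R1 s = integral {tau0 s..s} (\<lambda>\<tau>. ln (s / \<tau>) powr (-\<alpha>) * gg \<tau> / \<tau>)"
definition "R2 s = integral {tau0 s..t} (\<lambda>\<tau>. ln (t / \<tau>) powr (-\<alpha>) * gg \<tau> / \<tau>)"

lemma gint': "a < s \<Longrightarrow> s \<le> b \<Longrightarrow> (\<lambda>\<tau>. ln (s / \<tau>) powr (-\<alpha>) * gg \<tau> / \<tau>) integrable_on {a..s}"
  by (rule set_lebesgue_integral_eq_integral(1)[OF gint])

lemma split:
  assumes "cnd s"
  shows "(G s - G t) / (ln s - ln t) = integral {a..t} (qf s) + (R1 s - R2 s) / (ln s - ln t)"
proof -
  note cp = cnd_props[OF assms]
  have s: "a < s" "s < b" using assms by (auto simp: cnd_def)
  define fs where "fs = (\<lambda>\<tau>. ln (s / \<tau>) powr (-\<alpha>) * gg \<tau> / \<tau>)"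
  define ft where "ft = (\<lambda>\<tau>. ln (t / \<tau>) powr (-\<alpha>) * gg \<tau> / \<tau>)"
  define h where "h = ln s - ln t"
  have is_: "fs integrable_on {a..s}" unfolding fs_def using s by (intro gint') auto
  have it: "ft integrable_on {a..t}" unfolding ft_def using tin by (intro gint') auto
  have is0: "fs integrable_on {a..tau0 s}"
    by (rule integrable_on_subinterval[OF is_]) (use cp in auto)
  have it0: "ft integrable_on {a..tau0 s}"
    by (rule integrable_on_subinterval[OF it]) (use cp in auto)
  have Gs: "G s = integral {a..tau0 s} fs + R1 s"
    unfolding G_def R1_def fs_def[symmetric] using Henstock_Kurzweil_Integration.integral_combine[OF cp(1) cp(3) is_] by simp
  have Gt: "G t = integral {a..tau0 s} ft + R2 s"
    unfolding G_def R2_def ft_def[symmetric] using Henstock_Kurzweil_Integration.integral_combine[OF cp(1) less_imp_le[OF cp(2)] it] by simp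
  have "integral {a..t} (qf s) = integral ({..tau0 s} \<inter> {a..t})
      (\<lambda>\<tau>. (ln (s / \<tau>) powr (-\<alpha>) - ln (t / \<tau>) powr (-\<alpha>)) / (ln s - ln t) * gg \<tau> / \<tau>)"
    unfolding qf_def by (rule integral_restrict_Int)
  also have "{..tau0 s} \<inter> {a..t} = {a..tau0 s}" using cp by auto
  also have "integral {a..tau0 s} (\<lambda>\<tau>. (ln (s / \<tau>) powr (-\<alpha>) - ln (t / \<tau>) powr (-\<alpha>)) / (ln s - ln t) * gg \<tau> / \<tau>)
      = integral {a..tau0 s} (\<lambda>\<tau>. (fs \<tau> - ft \<tau>) / h)"
  proof (rule integral_cong)
    fix x assume "x \<in> {a..tau0 s}"
    then have "x \<noteq> 0" "ln s - ln t \<noteq> 0" using ab cp(4) by auto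
    then show "(ln (s / x) powr (-\<alpha>) - ln (t / x) powr (-\<alpha>)) / (ln s - ln t) * gg x / x = (fs x - ft x) / h"
      by (simp add: fs_def ft_def h_def field_simps)
  qed
  also have "\<dots> = (integral {a..tau0 s} fs - integral {a..tau0 s} ft) / h"
    using integral_diff[OF is0 it0] by simp
  finally have Q: "integral {a..t} (qf s) = (integral {a..tau0 s} fs - integral {a..tau0 s} ft) / h" .
  show ?thesis unfolding Q Gs Gt h_def[symmetric] by (simp add: diff_divide_distrib add_divide_distrib)
qed

lemma R_lim: "((\<lambda>s. (R1 s - R2 s) / (ln s - ln t)) \<longlongrightarrow> 0) (at t)"
proof (rule Lim_null_comparison)
  show "eventually (\<lambda>s. norm ((R1 s - R2 s) / (ln s - ln t)) \<le> 4 * M * ((3 * \<bar>ln s - ln t\<bar>) powr (1 - \<alpha>) / (1 - \<alpha>))) (at t)"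
    using cnd_ev
  proof eventually_elim
    case (elim s)
    note cp = cnd_props[OF elim]
    have s: "a < s" "s < b" using elim by (auto simp: cnd_def)
    define h where "h = ln s - ln t"
    have hp: "\<bar>h\<bar> > 0" using cp by (simp add: h_def)
    define P where "P = (3 * \<bar>h\<bar>) powr (1 - \<alpha>) / (1 - \<alpha>)"
    have r1: "\<bar>R1 s\<bar> \<le> M * (2 * \<bar>h\<bar>) * (ln (s / tau0 s) powr (1 - \<alpha>) / (1 - \<alpha>))"
      unfolding R1_def
    proof (rule R_bound)
      fix \<tau> assume \<tau>: "\<tau> \<in> {tau0 s..s}"
      then have "\<tau> > 0" using cp by auto
      then have "ln (tau0 s) \<le> ln \<tau>" "ln \<tau> \<le> ln s" using cp(6,7) \<tau> by simp_all
      then show "\<bar>ln \<tau> - ln t\<bar> \<le> 2 * \<bar>h\<bar>" using cp(5) abs_ge_self[of "ln s - ln t"] abs_ge_zero[of "ln s - ln t"]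
        unfolding h_def by (auto simp: abs_le_iff)
    qed (use cp s in auto)
    have r2: "\<bar>R2 s\<bar> \<le> M * (2 * \<bar>h\<bar>) * (ln (t / tau0 s) powr (1 - \<alpha>) / (1 - \<alpha>))"
      unfolding R2_def
    proof (rule R_bound)
      fix \<tau> assume \<tau>: "\<tau> \<in> {tau0 s..t}"
      then have "\<tau> > 0" using cp by auto
      then have "ln (tau0 s) \<le> ln \<tau>" "ln \<tau> \<le> ln t" using cp(7) \<tau> by simp_all
      then show "\<bar>ln \<tau> - ln t\<bar> \<le> 2 * \<bar>h\<bar>" using cp(5) abs_ge_self[of "ln s - ln t"] abs_ge_zero[of "ln s - ln t"]
        unfolding h_def by (auto simp: abs_le_iff)
    qed (use cp tin in auto)
    have "ln (s / tau0 s) = h + 2 * \<bar>h\<bar>" using cp by (simp add: ln_div h_def)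
    then have l1: "ln (s / tau0 s) powr (1 - \<alpha>) / (1 - \<alpha>) \<le> P"
      unfolding P_def using al by (intro divide_right_mono powr_mono2) (auto simp: abs_if)
    have "ln (t / tau0 s) = 2 * \<bar>h\<bar>" using cp tin ab by (simp add: ln_div h_def)
    then have l2: "ln (t / tau0 s) powr (1 - \<alpha>) / (1 - \<alpha>) \<le> P"
      unfolding P_def using al by (intro divide_right_mono powr_mono2) auto
    have M2: "M * (2 * \<bar>h\<bar>) \<ge> 0" using M(1) by simp
    have "\<bar>R1 s\<bar> \<le> M * (2 * \<bar>h\<bar>) * P" using r1 mult_left_mono[OF l1 M2] by linarith
    moreover have "\<bar>R2 s\<bar> \<le> M * (2 * \<bar>h\<bar>) * P" using r2 mult_left_mono[OF l2 M2] by linarith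
    ultimately have "\<bar>R1 s - R2 s\<bar> \<le> \<bar>h\<bar> * (4 * M * P)" by (simp add: algebra_simps)
    then have "\<bar>R1 s - R2 s\<bar> / \<bar>h\<bar> \<le> 4 * M * P" using hp by (simp add: divide_le_eq mult.commute)
    then show ?case by (simp add: h_def P_def abs_divide)
  qed
  have "((\<lambda>s. (3 * \<bar>ln s - ln t\<bar>) powr (1 - \<alpha>)) \<longlongrightarrow> 0) (at t)"
  proof (rule tendsto_zero_powrI[where b="1 - \<alpha>"])
    have "((\<lambda>s. ln s) \<longlongrightarrow> ln t) (at t)" by (intro tendsto_intros) (use tin ab in auto)
    then have "((\<lambda>s. 3 * \<bar>ln s - ln t\<bar>) \<longlongrightarrow> 3 * \<bar>ln t - ln t\<bar>) (at t)"
      by (intro tendsto_mult tendsto_rabs tendsto_diff tendsto_const)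
    then show "((\<lambda>s. 3 * \<bar>ln s - ln t\<bar>) \<longlongrightarrow> 0) (at t)" by simp
  qed (use al in auto)
  then have "((\<lambda>s. 4 * M * ((3 * \<bar>ln s - ln t\<bar>) powr (1 - \<alpha>) / (1 - \<alpha>))) \<longlongrightarrow> 4 * M * (0 / (1 - \<alpha>))) (at t)"
    by (intro tendsto_intros) (use al in auto)
  then show "((\<lambda>s. 4 * M * ((3 * \<bar>ln s - ln t\<bar>) powr (1 - \<alpha>) / (1 - \<alpha>))) \<longlongrightarrow> 0) (at t)" by simp
qed

lemma G_deriv: "(G has_real_derivative (-\<alpha> * K) * (1 / t)) (at t)"
proof -
  have "((\<lambda>s. integral {a..t} (qf s) + (R1 s - R2 s) / (ln s - ln t)) \<longlongrightarrow> -\<alpha> * K + 0) (at t)"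
    by (intro tendsto_add Q_lim R_lim)
  then have "((\<lambda>s. integral {a..t} (qf s) + (R1 s - R2 s) / (ln s - ln t)) \<longlongrightarrow> -\<alpha> * K) (at t)"
    by simp
  then have l1: "((\<lambda>s. (G s - G t) / (ln s - ln t)) \<longlongrightarrow> -\<alpha> * K) (at t)"
  proof (rule Lim_transform_eventually)
    show "eventually (\<lambda>s. integral {a..t} (qf s) + (R1 s - R2 s) / (ln s - ln t) = (G s - G t) / (ln s - ln t)) (at t)"
      using cnd_ev by eventually_elim (simp add: split)
  qed
  have "(ln has_real_derivative 1 / t) (at t)" using tin ab by (auto intro!: derivative_eq_intros)
  then have l2: "((\<lambda>s. (ln s - ln t) / (s - t)) \<longlongrightarrow> 1 / t) (at t)"
    by (simp add: has_field_derivative_iff)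
  have "((\<lambda>s. (G s - G t) / (ln s - ln t) * ((ln s - ln t) / (s - t))) \<longlongrightarrow> (-\<alpha> * K) * (1 / t)) (at t)"
    by (rule tendsto_mult[OF l1 l2])
  then have "((\<lambda>s. (G s - G t) / (s - t)) \<longlongrightarrow> (-\<alpha> * K) * (1 / t)) (at t)"
  proof (rule Lim_transform_eventually)
    show "eventually (\<lambda>s. (G s - G t) / (ln s - ln t) * ((ln s - ln t) / (s - t)) = (G s - G t) / (s - t)) (at t)"
      using cnd_ev by eventually_elim (use cnd_props(4) in simp)
  qed
  then show ?thesis by (simp add: has_field_derivative_iff)
qed

lemma F_eq:
  assumes "a < s" "s \<le> b"
  shows "integral {a..s} (\<lambda>\<tau>. ln (s / \<tau>) powr (-\<alpha>) * x \<tau> / \<tau>)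
           = x t * (ln (s / a) powr (1 - \<alpha>) / (1 - \<alpha>)) + G s"
proof -
  have k: "((\<lambda>\<tau>. x t * (ln (s / \<tau>) powr (-\<alpha>) / \<tau>)) has_integral x t * (ln (s / a) powr (1 - \<alpha>) / (1 - \<alpha>))) {a..s}"
    using ker_has_int[of a s \<alpha>] assms ab al by (intro has_integral_mult_right) auto
  have g: "((\<lambda>\<tau>. ln (s / \<tau>) powr (-\<alpha>) * gg \<tau> / \<tau>) has_integral G s) {a..s}"
    unfolding G_def using gint'[OF assms] by (rule integrable_integral)
  have "((\<lambda>\<tau>. x t * (ln (s / \<tau>) powr (-\<alpha>) / \<tau>) + ln (s / \<tau>) powr (-\<alpha>) * gg \<tau> / \<tau>) has_integral
          x t * (ln (s / a) powr (1 - \<alpha>) / (1 - \<alpha>)) + G s) {a..s}"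
    by (rule has_integral_add[OF k g])
  moreover have "(\<lambda>\<tau>. x t * (ln (s / \<tau>) powr (-\<alpha>) / \<tau>) + ln (s / \<tau>) powr (-\<alpha>) * gg \<tau> / \<tau>)
      = (\<lambda>\<tau>. ln (s / \<tau>) powr (-\<alpha>) * x \<tau> / \<tau>)"
    by (rule ext) (auto simp: gg_def field_split_simps)
  ultimately show ?thesis by (simp add: integral_unique)
qed

lemma had_eq: "hadamard_left_deriv \<alpha> a x t = (1 / Gamma (1 - \<alpha>)) * (L powr (-\<alpha>) * x t - \<alpha> * K)"
proof -
  define D where "D = (1 / Gamma (1 - \<alpha>)) * (x t * ((1 - \<alpha>) * ln (t / a) powr (1 - \<alpha> - of_nat 1) * (1 / t) / (1 - \<alpha>))
     + (-\<alpha> * K) * (1 / t))"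
  have l: "((\<lambda>s. ln (s / a)) has_real_derivative 1 / t) (at t)"
    using ab tin by (auto intro!: derivative_eq_intros simp: field_simps)
  have "((\<lambda>s. (1 / Gamma (1 - \<alpha>)) * (x t * (ln (s / a) powr (1 - \<alpha>) / (1 - \<alpha>)) + G s)) has_real_derivative D) (at t)"
    unfolding D_def
  proof (intro DERIV_cmult DERIV_add DERIV_cdivide G_deriv)
    show "((\<lambda>s. ln (s / a) powr (1 - \<alpha>)) has_real_derivative (1 - \<alpha>) * ln (t / a) powr (1 - \<alpha> - of_nat 1) * (1 / t)) (at t)"
      by (rule DERIV_fun_powr[OF l]) (use ab tin in simp)
  qed
  then have "((\<lambda>s. (1 / Gamma (1 - \<alpha>)) * integral {a..s} (\<lambda>\<tau>. ln (s / \<tau>) powr (-\<alpha>) * x \<tau> / \<tau>)) has_real_derivative D) (at t)"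
  proof (rule has_field_derivative_transform_within_open[where S="{a<..<b}"])
    fix s assume "s \<in> {a<..<b}"
    then show "(1 / Gamma (1 - \<alpha>)) * (x t * (ln (s / a) powr (1 - \<alpha>) / (1 - \<alpha>)) + G s) =
        (1 / Gamma (1 - \<alpha>)) * integral {a..s} (\<lambda>\<tau>. ln (s / \<tau>) powr (-\<alpha>) * x \<tau> / \<tau>)"
      using F_eq[of s] by simp
  qed (use tin in auto)
  then have "hadamard_left_deriv \<alpha> a x t = t * D"
    unfolding hadamard_left_deriv_def by (simp add: DERIV_imp_deriv)
  also have "\<dots> = (1 / Gamma (1 - \<alpha>)) * (L powr (-\<alpha>) * x t - \<alpha> * K)"
  proof -
    have e1: "(1 - \<alpha>) * ln (t / a) powr (1 - \<alpha> - of_nat 1) * (1 / t) / (1 - \<alpha>) = L powr (-\<alpha>) / t"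
      using al by (simp add: L_def)
    have "t * D = (1 / Gamma (1 - \<alpha>)) * (t * (x t * (L powr (-\<alpha>) / t)) + t * ((-\<alpha> * K) * (1 / t)))"
      unfolding D_def e1 by (metis distrib_left mult.left_commute)
    also have "\<dots> = (1 / Gamma (1 - \<alpha>)) * (L powr (-\<alpha>) * x t - \<alpha> * K)"
    proof -
      have tn: "t \<noteq> 0" using tin ab by simp
      have "t * (x t * (L powr (-\<alpha>) / t)) = L powr (-\<alpha>) * x t" using tn by simp
      moreover have "t * ((-\<alpha> * K) * (1 / t)) = - (\<alpha> * K)" using tn by simp
      ultimately show ?thesis by simp
    qed
    finally show ?thesis .
  qed
  finally show ?thesis .
qed

definition "cn n = pochhammer (\<alpha> + 1) n / fact n"
definition "In n = integral {a..t} (\<lambda>\<tau>. ln (\<tau> / a) ^ n * gg \<tau> / \<tau>)"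

lemma cn_nonneg: "cn n \<ge> 0"
  unfolding cn_def using al by (intro divide_nonneg_nonneg less_imp_le[OF pochhammer_pos]) auto

lemma binom:
  assumes "0 \<le> z" "z < 1"
  shows "(\<lambda>n. cn n * z ^ n) sums (1 - z) powr (-\<alpha> - 1)"
proof -
  have "(\<lambda>n. ((-\<alpha> - 1) gchoose n) * (-z) ^ n) sums (1 + -z) powr (-\<alpha> - 1)"
    by (rule gen_binomial_real) (use assms in auto)
  moreover have "((-\<alpha> - 1) gchoose n) * (-z) ^ n = cn n * z ^ n" for n
  proof -
    have "((-\<alpha> - 1) gchoose n) = (-1) ^ n * pochhammer (\<alpha> + 1) n / fact n"
      by (simp add: gbinomial_pochhammer add.commute)
    moreover have "(-z) ^ n = (-1) ^ n * z ^ n" by (rule power_minus)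
    moreover have "((-1::real) ^ n) * (-1) ^ n = 1"
      by (simp add: power_mult_distrib[symmetric])
    ultimately show ?thesis unfolding cn_def
      by (metis (no_types, lifting) mult.assoc mult.commute mult.left_neutral times_divide_eq_left)
  qed
  ultimately show ?thesis by simp
qed

lemma cont_lnpow: "continuous_on {a..t} (\<lambda>\<tau>. ln (\<tau> / a) ^ n * f \<tau> / \<tau>)"
  if "continuous_on {a..t} f" for f
proof -
  have "\<forall>\<tau>\<in>{a..t}. \<tau> \<noteq> 0 \<and> \<tau> / a \<noteq> 0" using ab by auto
  then show ?thesis
    by (intro continuous_on_divide continuous_on_mult continuous_on_power continuous_on_ln
        continuous_on_const continuous_on_id that) auto
qed

lemma In_int: "(\<lambda>\<tau>. ln (\<tau> / a) ^ n * gg \<tau> / \<tau>) integrable_on {a..t}"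
  by (rule integrable_continuous_interval cont_lnpow continuous_on_subset[OF cont_gg])+ (use tin in auto)

lemma Ix_int: "(\<lambda>\<tau>. ln (\<tau> / a) ^ n * x \<tau> / \<tau>) integrable_on {a..t}"
  by (rule integrable_continuous_interval cont_lnpow continuous_on_subset[OF cont])+ (use tin in auto)

lemma lnpow_int: "((\<lambda>\<tau>. ln (\<tau> / a) ^ n / \<tau>) has_integral L ^ (n + 1) / (n + 1)) {a..t}"
proof -
  define F where "F = (\<lambda>\<tau>. ln (\<tau> / a) ^ (Suc n) / real (Suc n))"
  have "((\<lambda>\<tau>. ln (\<tau> / a) ^ n / \<tau>) has_integral (F t - F a)) {a..t}"
  proof (rule fundamental_theorem_of_calculus_interior)
    show "continuous_on {a..t} F" unfolding F_def using ab
      by (intro continuous_on_divide continuous_on_power continuous_on_ln continuous_on_const continuous_on_id) auto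
    fix \<tau> assume \<tau>: "\<tau> \<in> {a<..<t}"
    then have tp: "\<tau> > 0" using ab by auto
    have "(F has_real_derivative ln (\<tau> / a) ^ n / \<tau>) (at \<tau>)"
    proof -
      have l: "((\<lambda>\<tau>. ln (\<tau> / a)) has_real_derivative 1 / \<tau>) (at \<tau>)"
        using tp ab by (auto intro!: derivative_eq_intros simp: field_simps)
      have p: "((\<lambda>y. y ^ Suc n) has_real_derivative real (Suc n) * ln (\<tau> / a) ^ n) (at (ln (\<tau> / a)))"
        using DERIV_pow[of "Suc n" "ln (\<tau> / a)"] by simp
      have "(F has_real_derivative real (Suc n) * ln (\<tau> / a) ^ n * (1 / \<tau>) / real (Suc n)) (at \<tau>)"
        unfolding F_def by (intro DERIV_cdivide DERIV_chain2[OF p l])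
      then show ?thesis by simp
    qed
    then show "(F has_vector_derivative ln (\<tau> / a) ^ n / \<tau>) (at \<tau>)"
      by (simp add: has_real_derivative_iff_has_vector_derivative)
  qed (use tin in auto)
  moreover have "F t - F a = L ^ (n + 1) / (n + 1)" using ab by (simp add: F_def L_def)
  ultimately show ?thesis by simp
qed

definition "phi \<tau> = ln (\<tau> / a) / L"

lemma phi_props:
  assumes "\<tau> \<in> {a..<t}"
  shows "0 \<le> phi \<tau>" "phi \<tau> < 1"
    "(1 - phi \<tau>) powr (-\<alpha> - 1) = L powr (\<alpha> + 1) * ln (t / \<tau>) powr (-\<alpha> - 1)"
proof -
  have tp: "\<tau> > 0" "a \<le> \<tau>" "\<tau> < t" using assms ab by auto
  have Lp: "L > 0" by (rule Lpos)
  have l1: "ln (\<tau> / a) \<ge> 0" using tp ab by simp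
  have l2: "ln (\<tau> / a) < L" using tp ab tin by (simp add: L_def divide_strict_right_mono)
  show "0 \<le> phi \<tau>" using l1 Lp by (simp add: phi_def)
  show "phi \<tau> < 1" using l2 Lp by (simp add: phi_def)
  have "1 - phi \<tau> = ln (t / \<tau>) / L"
    using Lp tp ab tin by (simp add: phi_def L_def field_simps ln_div)
  moreover have "(ln (t / \<tau>) / L) powr (-\<alpha> - 1) = ln (t / \<tau>) powr (-\<alpha> - 1) / L powr (-\<alpha> - 1)"
    using Lp tp ab by (simp add: powr_divide)
  moreover have "L powr (-\<alpha> - 1) = inverse (L powr (\<alpha> + 1))"
  proof -
    have "L powr (-\<alpha> - 1) = L powr (-(\<alpha> + 1))"
      by (rule arg_cong[where f="\<lambda>e. L powr e"]) simp
    also have "\<dots> = inverse (L powr (\<alpha> + 1))" by (rule powr_minus)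
    finally show ?thesis .
  qed
  ultimately show "(1 - phi \<tau>) powr (-\<alpha> - 1) = L powr (\<alpha> + 1) * ln (t / \<tau>) powr (-\<alpha> - 1)"
    by (simp add: divide_inverse mult.commute)
qed

lemma series_lim: "(\<lambda>N. \<Sum>n<N. cn n * (In n / L ^ n)) \<longlonglongrightarrow> L powr (\<alpha> + 1) * K"
proof -
  define f where "f = (\<lambda>N \<tau>. \<Sum>n<N. cn n * phi \<tau> ^ n * gg \<tau> / \<tau>)"
  have tint: "(\<lambda>\<tau>. cn n * phi \<tau> ^ n * gg \<tau> / \<tau>) integrable_on {a..t}"
    and tval: "integral {a..t} (\<lambda>\<tau>. cn n * phi \<tau> ^ n * gg \<tau> / \<tau>) = cn n * (In n / L ^ n)" for n
  proof -
    have e: "(\<lambda>\<tau>. cn n * phi \<tau> ^ n * gg \<tau> / \<tau>) = (\<lambda>\<tau>. (cn n / L ^ n) * (ln (\<tau> / a) ^ n * gg \<tau> / \<tau>))"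
      by (rule ext) (simp add: phi_def power_divide)
    show "(\<lambda>\<tau>. cn n * phi \<tau> ^ n * gg \<tau> / \<tau>) integrable_on {a..t}"
      unfolding e using integrable_on_cmult_left[OF In_int[of n], of "cn n / L ^ n"] by simp
    show "integral {a..t} (\<lambda>\<tau>. cn n * phi \<tau> ^ n * gg \<tau> / \<tau>) = cn n * (In n / L ^ n)"
      unfolding e In_def by (simp only: integral_mult_right) simp
  qed
  have fint: "f N integrable_on {a..t}" for N
    unfolding f_def by (intro integrable_sum tint) auto
  have feq: "(\<Sum>n<N. cn n * (In n / L ^ n)) = integral {a..t} (f N)" for N
    unfolding f_def by (subst integral_sum) (auto simp: tint tval)
  have hint: "(\<lambda>\<tau>. L powr (\<alpha> + 1) * \<bar>kK \<tau>\<bar>) integrable_on {a..t}"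
  proof -
    have "(\<lambda>\<tau>. norm (kK \<tau>)) integrable_on {a..t}"
      using K_int by (simp add: absolutely_integrable_on_def)
    then show ?thesis using integrable_on_cmult_left[of "\<lambda>\<tau>. norm (kK \<tau>)" "{a..t}" "L powr (\<alpha> + 1)"] by simp
  qed
  have gt0: "gg t = 0" by (simp add: gg_def)
  have bound: "norm (f N \<tau>) \<le> L powr (\<alpha> + 1) * \<bar>kK \<tau>\<bar>" if \<tau>: "\<tau> \<in> {a..t}" for N \<tau>
  proof (cases "\<tau> = t")
    case True then show ?thesis by (simp add: f_def gt0)
  next
    case False
    then have \<tau>': "\<tau> \<in> {a..<t}" using \<tau> by auto
    note pp = phi_props[OF \<tau>']
    have tp: "\<tau> > 0" using \<tau> ab by auto
    have sm: "(\<lambda>n. cn n * phi \<tau> ^ n) sums (1 - phi \<tau>) powr (-\<alpha> - 1)" by (rule binom[OF pp(1,2)])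
    have nn: "0 \<le> cn n * phi \<tau> ^ n" for n using cn_nonneg pp by simp
    have "(\<Sum>n<N. cn n * phi \<tau> ^ n) \<le> (1 - phi \<tau>) powr (-\<alpha> - 1)"
      using sum_le_suminf[OF sums_summable[OF sm], of "{..<N}"] nn sums_unique[OF sm] by simp
    moreover have "f N \<tau> = (\<Sum>n<N. cn n * phi \<tau> ^ n) * (gg \<tau> / \<tau>)"
      unfolding f_def by (simp add: sum_distrib_right sum_divide_distrib)
    moreover have "(\<Sum>n<N. cn n * phi \<tau> ^ n) \<ge> 0" using nn by (intro sum_nonneg) auto
    ultimately have "norm (f N \<tau>) \<le> (1 - phi \<tau>) powr (-\<alpha> - 1) * (\<bar>gg \<tau>\<bar> / \<tau>)"
      using tp by (simp add: abs_mult abs_divide divide_right_mono mult_right_mono)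
    also have "\<dots> = L powr (\<alpha> + 1) * \<bar>kK \<tau>\<bar>"
      unfolding pp(3) kK_def using tp by (simp add: abs_mult abs_divide)
    finally show ?thesis .
  qed
  have conv: "(\<lambda>N. f N \<tau>) \<longlonglongrightarrow> L powr (\<alpha> + 1) * kK \<tau>" if \<tau>: "\<tau> \<in> {a..t}" for \<tau>
  proof (cases "\<tau> = t")
    case True then show ?thesis by (simp add: f_def gt0 kK_def)
  next
    case False
    then have \<tau>': "\<tau> \<in> {a..<t}" using \<tau> by auto
    note pp = phi_props[OF \<tau>']
    have sm: "(\<lambda>n. cn n * phi \<tau> ^ n) sums (1 - phi \<tau>) powr (-\<alpha> - 1)" by (rule binom[OF pp(1,2)])
    then have "(\<lambda>N. (\<Sum>n<N. cn n * phi \<tau> ^ n) * (gg \<tau> / \<tau>)) \<longlonglongrightarrow> (1 - phi \<tau>) powr (-\<alpha> - 1) * (gg \<tau> / \<tau>)"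
      unfolding sums_def by (intro tendsto_mult_right)
    moreover have "(\<lambda>N. (\<Sum>n<N. cn n * phi \<tau> ^ n) * (gg \<tau> / \<tau>)) = (\<lambda>N. f N \<tau>)"
      unfolding f_def by (simp add: sum_distrib_right sum_divide_distrib)
    moreover have "(1 - phi \<tau>) powr (-\<alpha> - 1) * (gg \<tau> / \<tau>) = L powr (\<alpha> + 1) * kK \<tau>"
      unfolding pp(3) kK_def by simp
    ultimately show ?thesis by simp
  qed
  have "(\<lambda>N. integral {a..t} (f N)) \<longlonglongrightarrow> integral {a..t} (\<lambda>\<tau>. L powr (\<alpha> + 1) * kK \<tau>)"
    by (rule dominated_convergence(2)[OF fint hint bound conv])
  then show ?thesis unfolding feq by (simp add: K_def)
qed

lemma Ix_eq: "integral {a..t} (\<lambda>\<tau>. ln (\<tau> / a) ^ n * x \<tau> / \<tau>) = In n + x t * (L ^ (n + 1) / (n + 1))"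
proof -
  have e: "(\<lambda>\<tau>. ln (\<tau> / a) ^ n * x \<tau> / \<tau>) = (\<lambda>\<tau>. ln (\<tau> / a) ^ n * gg \<tau> / \<tau> + x t * (ln (\<tau> / a) ^ n / \<tau>))"
    by (rule ext) (simp add: gg_def algebra_simps diff_divide_distrib)
  have "((\<lambda>\<tau>. ln (\<tau> / a) ^ n * gg \<tau> / \<tau> + x t * (ln (\<tau> / a) ^ n / \<tau>)) has_integral In n + x t * (L ^ (n + 1) / (n + 1))) {a..t}"
    unfolding In_def by (intro has_integral_add integrable_integral In_int has_integral_mult_right lnpow_int)
  then show ?thesis unfolding e by (rule integral_unique)
qed

lemma term_eq:
  "(let p = n + 2 in hadC \<alpha> p * ln (t / a) powr (1 - \<alpha> - real p) * hadV a x p t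
      - Gamma (real p + \<alpha> - 1) / (Gamma \<alpha> * Gamma (1 - \<alpha>) * fact (p - 1)) * ln (t / a) powr (- \<alpha>) * x t)
   = (\<alpha> / Gamma (1 - \<alpha>)) * (L powr (-\<alpha>) / L) * (cn n * (In n / L ^ n))"
proof -
  have Lp: "L > 0" by (rule Lpos)
  have hv: "hadV a x (n + 2) t = (1 - real (n + 2)) * (In n + x t * (L ^ (n + 1) / (n + 1)))"
    unfolding hadV_def using Ix_eq by simp
  have pw: "ln (t / a) powr (1 - \<alpha> - real (n + 2)) = L powr (-\<alpha>) / (L * L ^ n)"
  proof -
    have "1 - \<alpha> - real (n + 2) = -\<alpha> - real (Suc n)" by simp
    then have "ln (t / a) powr (1 - \<alpha> - real (n + 2)) = L powr (-\<alpha> - real (Suc n))"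
      unfolding L_def by (rule arg_cong[where f="\<lambda>e. ln (t / a) powr e"])
    also have "\<dots> = L powr (-\<alpha>) / L powr real (Suc n)" by (rule powr_diff)
    also have "L powr real (Suc n) = L * L ^ n" using powr_realpow[OF Lp, of "Suc n"] by simp
    finally show ?thesis .
  qed
  have gen: "(- (\<alpha> * pc / (G * F1))) * (P / (L * Ln)) * ((1 - (m + 2)) * (J + X * (L * Ln / (m + 1))))
      - \<alpha> * pc / (G * F1) * P * X = \<alpha> / G * (P / L) * (pc / F * (J / Ln))"
    if "G \<noteq> 0" "F \<noteq> 0" "m + 1 \<noteq> 0" "L \<noteq> 0" "Ln \<noteq> 0" "F1 = (m + 1) * F"
    for pc G F F1 m L Ln P J X :: real
  proof -
    define m1 where "m1 = m + 1"
    have e: "1 - (m + 2) = - m1" "m + 1 = m1" "F1 = m1 * F" using that(6) by (auto simp: m1_def)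
    have "m1 \<noteq> 0" using that(3) by (simp add: m1_def)
    then show ?thesis unfolding e using that(1,2,4,5) by (simp add: field_simps)
  qed
  have ff: "fact (n + 1) = (real n + 1) * (fact n :: real)" by (simp add: algebra_simps)
  have nz: "Gamma (1 - \<alpha>) \<noteq> 0" "fact n \<noteq> (0::real)" "real n + 1 \<noteq> 0" "L \<noteq> 0" "L ^ n \<noteq> 0"
  proof -
    have "Gamma (1 - \<alpha>) > 0" using al by (intro Gamma_real_pos) simp
    then show "Gamma (1 - \<alpha>) \<noteq> 0" "fact n \<noteq> (0::real)" "real n + 1 \<noteq> 0" "L \<noteq> 0" "L ^ n \<noteq> 0"
      using Lp by auto
  qed
  have pw': "L powr (- \<alpha> - real n - 1) = L powr (-\<alpha>) / (L * L ^ n)"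
    using pw by (simp add: L_def)
  have "L ^ (n + 1) = L * L ^ n" by simp
  then show ?thesis
    unfolding Let_def gamma_coefs[OF al] hv pw cn_def L_def[symmetric]
    using gen[OF nz ff, of "pochhammer (\<alpha> + 1) n" "L powr (-\<alpha>)" "In n" "x t"]
    by (simp add: add.commute pw')
qed

lemma series_sums:
  "(\<lambda>n. let p = n + 2 in hadC \<alpha> p * ln (t / a) powr (1 - \<alpha> - real p) * hadV a x p t
      - Gamma (real p + \<alpha> - 1) / (Gamma \<alpha> * Gamma (1 - \<alpha>) * fact (p - 1)) * ln (t / a) powr (- \<alpha>) * x t)
   sums ((\<alpha> / Gamma (1 - \<alpha>)) * K)"
proof -
  have "(\<lambda>n. cn n * (In n / L ^ n)) sums (L powr (\<alpha> + 1) * K)"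
    using series_lim by (simp add: sums_def)
  then have "(\<lambda>n. (\<alpha> / Gamma (1 - \<alpha>)) * (L powr (-\<alpha>) / L) * (cn n * (In n / L ^ n)))
      sums ((\<alpha> / Gamma (1 - \<alpha>)) * (L powr (-\<alpha>) / L) * (L powr (\<alpha> + 1) * K))"
    by (rule sums_mult)
  moreover have one: "(L powr (-\<alpha>) / L) * L powr (\<alpha> + 1) = 1"
  proof -
    have Lp: "L > 0" by (rule Lpos)
    have "L powr (\<alpha> + 1) = L powr \<alpha> * L" using Lp by (simp add: powr_add)
    moreover have "L powr (-\<alpha>) * L powr \<alpha> = 1" using Lp by (simp add: powr_minus field_simps)
    ultimately show ?thesis using Lp by (simp add: field_simps)
  qed
  moreover have eqv: "(\<alpha> / Gamma (1 - \<alpha>)) * (L powr (-\<alpha>) / L) * (L powr (\<alpha> + 1) * K) = (\<alpha> / Gamma (1 - \<alpha>)) * K"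
  proof -
    have "(\<alpha> / Gamma (1 - \<alpha>)) * (L powr (-\<alpha>) / L) * (L powr (\<alpha> + 1) * K)
        = (\<alpha> / Gamma (1 - \<alpha>)) * ((L powr (-\<alpha>) / L) * L powr (\<alpha> + 1)) * K"
      by (simp only: mult.assoc)
    also have "\<dots> = (\<alpha> / Gamma (1 - \<alpha>)) * 1 * K" by (simp only: one)
    finally show ?thesis by simp
  qed
  ultimately have "(\<lambda>n. (\<alpha> / Gamma (1 - \<alpha>)) * (L powr (-\<alpha>) / L) * (cn n * (In n / L ^ n)))
      sums ((\<alpha> / Gamma (1 - \<alpha>)) * K)" by (simp only:)
  then show ?thesis unfolding term_eq .
qed

end

theorem mainTheorem1:
  fixes \<alpha> a b t :: real and x :: "real \<Rightarrow> real"
  assumes "0 < \<alpha>" "\<alpha> < 1" "0 < a" "a < b"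
    and "abs_continuous_on_interval a b x"
    and "t \<in> {a<..<b}"
    and "x differentiable (at t)"
  shows "hadamard_left_deriv \<alpha> a x t =
      (1 / Gamma (1 - \<alpha>)) * (ln (t / a)) powr (- \<alpha>) * x t
    + hadB \<alpha> * (ln (t / a)) powr (1 - \<alpha>) * t * deriv x t
    - (\<Sum>n. let p = n + 2 in
          hadC \<alpha> p * (ln (t / a)) powr (1 - \<alpha> - real p) * hadV a x p t
        - Gamma (real p + \<alpha> - 1) / (Gamma \<alpha> * Gamma (1 - \<alpha>) * fact (p - 1))
            * (ln (t / a)) powr (- \<alpha>) * x t)"
proof -
  have c: "continuous_on {a..b} x" by (rule ac_cont[OF assms(5)])
  interpret hs \<alpha> a b t x
    by unfold_locales (use assms c in auto)
  have s: "(\<Sum>n. let p = n + 2 in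
          hadC \<alpha> p * (ln (t / a)) powr (1 - \<alpha> - real p) * hadV a x p t
        - Gamma (real p + \<alpha> - 1) / (Gamma \<alpha> * Gamma (1 - \<alpha>) * fact (p - 1))
            * (ln (t / a)) powr (- \<alpha>) * x t) = (\<alpha> / Gamma (1 - \<alpha>)) * K"
    by (rule sums_unique[OF series_sums, symmetric])
  show ?thesis
    unfolding s had_eq hadB_zero[OF assms(1,2)] by (simp add: L_def algebra_simps)
qed

end
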